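(* Assume the standing hypothesis (H) below, and assume that $\nabla_wG(x,w)\in W'$ exists for all $(x,w)\in X\times W$ and that $\nabla_wG:X\times W\to W'$ is continuous. Let $u\in W^{1,1}(0,T;X)$, $w\in W^{1,1}(0,T;W)$, $x_0\in Z(w(0))$, let $\xi$ be the solution of the sweeping process with inputs $(u,w)$ and initial condition $x_0$, and $x=u-\xi$. Then $$\langle\dot\xi(t),\dot x(t)+s(t)\rangle=0\quad\text{for a.e. }t\in(0,T),$$ where $$s(t)=\frac{\nabla_xG(x(t),w(t))}{\mathrm{dist}(x(t),\partial Z(w(t)))+|\nabla_xG(x(t),w(t))|^2}\,\langle\dot w(t),\nabla_wG(x(t),w(t))\rangle_W.$$
   Context: $T>0$. $X$ is a real Hilbert space with inner product $\langle\cdot,\cdot\rangle$ and norm $|x|=\sqrt{\langle x,x\rangle}$; $W$ is a real Banach space with norm $|\cdot|_W$, dual $W'$ and duality pairing $\langle v,f\rangle_W$ ($v\in W$, $f\in W'$). $G:X\times W\to[0,\infty)$ is locally Lipschitz continuous and $Z(w):=\{x\in X: G(x,w)\le 1\}$; $\partial Z(w)$ is its boundary, $\mathrm{dist}(x,S)=\inf_{s\in S}|x-s|$. Partial gradients: $\nabla_xG(x,w)\in X$ with $\langle\nabla_xG(x,w),y\rangle=\lim_{t\to0}\frac1t(G(x+ty,w)-G(x,w))$ for all $y$; $\nabla_wG(x,w)\in W'$ with $\langle v,\nabla_wG(x,w)\rangle_W=\lim_{t\to0}\frac1t(G(x,w+tv)-G(x,w))$ for all $v$. (H): $\nabla_xG(x,w)$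 exists for all $(x,w)$; there are positive constants $\lambda,c,L$ and functions $\mu_1:W\times[0,\infty)\to[0,\infty)$, $\mu_2:[0,\infty)\to[0,\infty)$ with $\mu_1(w,0)=\mu_2(0)=0$, $\lim_{s\to\infty}\mu_1(w,s)=\lim_{s\to\infty}\mu_2(s)=\infty$ for every $w$, such that for all $x,y,z\in X$, $w,w'\in W$: (i) $G(x,w)=1\Rightarrow|\nabla_xG(x,w)|\ge c$; (ii) $|\nabla_xG(x,w)-\nabla_xG(y,w)|\le\mu_1(w,|x-y|)$ if $x,y\in Z(w)$; (iii) $\langle\nabla_xG(x,w)-\nabla_xG(z,w),x-z\rangle\ge-\lambda|x-z|^2$ if $x\in\partial Z(w)$, $z\in Z(w)$; (iv) $|G(x,w)-G(x,w')|\le L|w-w'|_W$; (v) for $\rho>0$, $\mathrm{dist}(x,Z(w))\ge\rho\Rightarrow G(x,w)-1\ge\mu_2(\rho)$. Set $r:=c/\lambda$. Sweeping process with inputs $(u,w)$ and initial condition $x_0\in Z(w(0))$: $\xi\in W^{1,1}(0,T;X)$ such that, with $x:=u-\xi$, $x(t)\in Z(w(t))$ for all $t\in[0,T]$, $\langle x(t)-z,\dot\xi(t)\rangle+\frac{|\dot\xi(t)|}{2r}|x(t)-z|^2\ge0$ for all $z\in Z(w(t))$ and a.e. $t$, and $x(0)=x_0$. Under (H) this solution exists and is unique. *)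

theory Defs
  imports "HOL-Analysis.Analysis"
begin

definition Zset :: "('x \<Rightarrow> 'w \<Rightarrow> real) \<Rightarrow> 'w \<Rightarrow> 'x set" where
  "Zset G w = {x. G x w \<le> 1}"

definition loc_lipschitz2 :: "('x::metric_space \<Rightarrow> 'w::metric_space \<Rightarrow> real) \<Rightarrow> bool" where
  "loc_lipschitz2 G \<longleftrightarrow>
     (\<forall>p. \<exists>e>0. \<exists>K. K-lipschitz_on (ball p e) (\<lambda>q. G (fst q) (snd q)))"

definition abs_cont_on :: "real \<Rightarrow> (real \<Rightarrow> 'a::metric_space) \<Rightarrow> bool" where
  "abs_cont_on T f \<longleftrightarrow>
     (\<forall>\<epsilon>>0. \<exists>\<delta>>0. \<forall>(I::nat set) a b. finite I \<longrightarrow>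
        (\<forall>i\<in>I. 0 \<le> a i \<and> a i \<le> b i \<and> b i \<le> T) \<longrightarrow>
        (\<forall>i\<in>I. \<forall>j\<in>I. i \<noteq> j \<longrightarrow> b i \<le> a j \<or> b j \<le> a i) \<longrightarrow>
        (\<Sum>i\<in>I. b i - a i) < \<delta> \<longrightarrow>
        (\<Sum>i\<in>I. dist (f (b i)) (f (a i))) < \<epsilon>)"

text \<open>W^{1,1}(0,T;V) for a Banach space V: by the Bochner/Komura characterisation,
  exactly the functions that are absolutely continuous on [0,T] and differentiable
  almost everywhere (then f(t) = f(0) + Bochner integral of f' over [0,t], f' in L^1).\<close>
definition W11 :: "real \<Rightarrow> (real \<Rightarrow> 'a::real_normed_vector) \<Rightarrow> bool" where
  "W11 T f \<longleftrightarrow> abs_cont_on T f \<and>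
     (AE t in lborel. t \<in> {0<..<T} \<longrightarrow> f differentiable (at t))"

definition sweeping_sol ::
  "('x::{real_inner,complete_space} \<Rightarrow> 'w::banach \<Rightarrow> real) \<Rightarrow> real \<Rightarrow> real \<Rightarrow>
   (real \<Rightarrow> 'x) \<Rightarrow> (real \<Rightarrow> 'w) \<Rightarrow> 'x \<Rightarrow> (real \<Rightarrow> 'x) \<Rightarrow> bool" where
  "sweeping_sol G r T u w x0 \<xi> \<longleftrightarrow>
     W11 T \<xi> \<and>
     (\<forall>t\<in>{0..T}. u t - \<xi> t \<in> Zset G (w t)) \<and>
     (AE t in lborel. t \<in> {0<..<T} \<longrightarrow>
        (\<forall>z\<in>Zset G (w t).
           inner (u t - \<xi> t - z) (vector_derivative \<xi> (at t))
           + norm (vector_derivative \<xi> (at t)) / (2 * r) * (norm (u t - \<xi> t - z))\<^sup>2 \<ge> 0)) \<and>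
     u 0 - \<xi> 0 = x0"

text \<open>dist(x, S) with the convention inf of the empty set = +\<infinity>; we only use it
  through 1/(dist + a), which is 0 when S is empty.\<close>
definition s_fun ::
  "('x::{real_inner,complete_space} \<Rightarrow> 'w::banach \<Rightarrow> real) \<Rightarrow> ('x \<Rightarrow> 'w \<Rightarrow> 'x) \<Rightarrow>
   ('x \<Rightarrow> 'w \<Rightarrow> ('w \<Rightarrow>\<^sub>L real)) \<Rightarrow> (real \<Rightarrow> 'x) \<Rightarrow> (real \<Rightarrow> 'w) \<Rightarrow> real \<Rightarrow> 'x" where
  "s_fun G Gx Gw x w t =
     (if frontier (Zset G (w t)) = {} then 0
      else (blinfun_apply (Gw (x t) (w t)) (vector_derivative w (at t))
              / (infdist (x t) (frontier (Zset G (w t))) + (norm (Gx (x t) (w t)))\<^sup>2))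
           *\<^sub>R Gx (x t) (w t))"

end

theory Submission
  imports Defs
begin

lemma vd_quot:
  fixes f :: "real \<Rightarrow> 'a::real_normed_vector"
  assumes "(f has_vector_derivative f') (at t)"
  shows "((\<lambda>h. (f (t + h) - f t) /\<^sub>R h) \<longlongrightarrow> f') (at 0)"
proof -
  have "((\<lambda>h. norm (f (t + h) - f t - h *\<^sub>R f') / norm h) \<longlongrightarrow> 0) (at 0)"
    using assms unfolding has_vector_derivative_def has_derivative_at by auto
  then have "((\<lambda>h. norm ((f (t + h) - f t) /\<^sub>R h - f')) \<longlongrightarrow> 0) (at 0)"
  proof (rule Lim_transform_eventually)
    show "\<forall>\<^sub>F h in at 0. norm (f (t + h) - f t - h *\<^sub>R f') / norm h = norm ((f (t + h) - f t) /\<^sub>R h - f')"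
    proof (rule eventually_mono[OF eventually_neq_at_within[of 0 0 UNIV]])
      fix h :: real assume h: "h \<noteq> 0"
      have "(f (t + h) - f t) /\<^sub>R h - f' = inverse h *\<^sub>R (f (t + h) - f t - h *\<^sub>R f')"
        using h by (simp add: algebra_simps)
      then show "norm (f (t + h) - f t - h *\<^sub>R f') / norm h = norm ((f (t + h) - f t) /\<^sub>R h - f')"
        by (simp add: divide_inverse mult.commute abs_inverse)
    qed
  qed
  then have "((\<lambda>h. (f (t + h) - f t) /\<^sub>R h - f') \<longlongrightarrow> 0) (at 0)"
    by (rule tendsto_norm_zero_cancel)
  then show ?thesis by (rule LIM_zero_cancel)
qed

lemma mvt_bound:
  fixes G :: "'x \<Rightarrow> 'w::real_normed_vector \<Rightarrow> real" and Gw :: "'x \<Rightarrow> 'w \<Rightarrow> ('w \<Rightarrow>\<^sub>L real)"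
  assumes Gw_grad: "\<And>w v. ((\<lambda>s. (G y (w + s *\<^sub>R v) - G y w) / s) \<longlongrightarrow> blinfun_apply (Gw y w) v) (at 0)"
    and bnd: "\<And>\<sigma>. 0 \<le> \<sigma> \<Longrightarrow> \<sigma> \<le> 1 \<Longrightarrow> norm (Gw y (w0 + \<sigma> *\<^sub>R k) - B) \<le> \<epsilon>"
  shows "\<bar>G y (w0 + k) - G y w0 - blinfun_apply B k\<bar> \<le> \<epsilon> * norm k"
proof -
  define f where "f s = G y (w0 + s *\<^sub>R k) - s * blinfun_apply B k" for s
  have D: "(f has_real_derivative (blinfun_apply (Gw y (w0 + s *\<^sub>R k)) k - blinfun_apply B k)) (at s)" for s
    unfolding DERIV_def
  proof -
    have "((\<lambda>h. (G y ((w0 + s *\<^sub>R k) + h *\<^sub>R k) - G y (w0 + s *\<^sub>R k)) / h - blinfun_apply B k)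
           \<longlongrightarrow> blinfun_apply (Gw y (w0 + s *\<^sub>R k)) k - blinfun_apply B k) (at 0)"
      by (intro tendsto_intros Gw_grad)
    then show "((\<lambda>h. (f (s + h) - f s) / h) \<longlongrightarrow> blinfun_apply (Gw y (w0 + s *\<^sub>R k)) k - blinfun_apply B k) (at 0)"
    proof (rule Lim_transform_eventually)
      show "\<forall>\<^sub>F h in at 0. (G y ((w0 + s *\<^sub>R k) + h *\<^sub>R k) - G y (w0 + s *\<^sub>R k)) / h - blinfun_apply B k = (f (s + h) - f s) / h"
      proof (rule eventually_mono[OF eventually_neq_at_within[of 0 0 UNIV]])
        fix h :: real assume h: "h \<noteq> 0"
        show "(G y ((w0 + s *\<^sub>R k) + h *\<^sub>R k) - G y (w0 + s *\<^sub>R k)) / h - blinfun_apply B k = (f (s + h) - f s) / h"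
          using h unfolding f_def by (simp add: algebra_simps diff_divide_distrib add_divide_distrib scaleR_add_left)
      qed
    qed
  qed
  obtain z where z: "0 < z" "z < 1" "f 1 - f 0 = (1 - 0) * (blinfun_apply (Gw y (w0 + z *\<^sub>R k)) k - blinfun_apply B k)"
    using MVT2[of 0 1 f "\<lambda>s. blinfun_apply (Gw y (w0 + s *\<^sub>R k)) k - blinfun_apply B k"] D by auto
  have "\<bar>blinfun_apply (Gw y (w0 + z *\<^sub>R k)) k - blinfun_apply B k\<bar> = norm (blinfun_apply (Gw y (w0 + z *\<^sub>R k) - B) k)"
    by (simp add: blinfun.diff_left)
  also have "\<dots> \<le> norm (Gw y (w0 + z *\<^sub>R k) - B) * norm k" by (rule norm_blinfun)
  also have "\<dots> \<le> \<epsilon> * norm k" using bnd[of z] z by (intro mult_right_mono) auto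
  finally show ?thesis using z(3) unfolding f_def by simp
qed

lemma partA:
  fixes G :: "'x::real_normed_vector \<Rightarrow> 'w::real_normed_vector \<Rightarrow> real" and Gw :: "'x \<Rightarrow> 'w \<Rightarrow> ('w \<Rightarrow>\<^sub>L real)"
    and y :: "real \<Rightarrow> 'x" and k :: "real \<Rightarrow> 'w"
  assumes Gw_grad: "\<And>x w v. ((\<lambda>s. (G x (w + s *\<^sub>R v) - G x w) / s) \<longlongrightarrow> blinfun_apply (Gw x w) v) (at 0)"
    and Gw_cont: "continuous_on UNIV (\<lambda>p. Gw (fst p) (snd p))"
    and y: "(y \<longlongrightarrow> y0) (at 0)"
    and kq: "((\<lambda>h. k h /\<^sub>R h) \<longlongrightarrow> w') (at 0)"
    and k0: "(k \<longlongrightarrow> 0) (at 0)"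
  shows "((\<lambda>h. (G (y h) (w0 + k h) - G (y h) w0) / h) \<longlongrightarrow> blinfun_apply (Gw y0 w0) w') (at 0)"
proof -
  define B0 where "B0 = Gw y0 w0"
  define E where "E h = G (y h) (w0 + k h) - G (y h) w0 - blinfun_apply B0 (k h)" for h
  have E0: "((\<lambda>h. E h / h) \<longlongrightarrow> 0) (at 0)"
    unfolding tendsto_iff
  proof (intro allI impI)
    fix e :: real assume e: "e > 0"
    define M where "M = norm w' + 1"
    have M: "M > 0" unfolding M_def by (simp add: add_nonneg_pos)
    define e2 where "e2 = e / (2 * M)"
    have e2: "e2 > 0" unfolding e2_def using e M by simp
    obtain d where d: "d > 0" and dd: "\<And>p. dist p (y0, w0) < d \<Longrightarrow> dist (Gw (fst p) (snd p)) B0 < e2"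
      using Gw_cont e2 unfolding continuous_on_iff B0_def by (metis UNIV_I fst_conv snd_conv)
    have ev1: "\<forall>\<^sub>F h in at 0. dist (y h) y0 < d / 2" using y d unfolding tendsto_iff by (meson half_gt_zero)
    have ev2: "\<forall>\<^sub>F h in at 0. dist (k h) 0 < d / 2" using k0 d unfolding tendsto_iff by (meson half_gt_zero)
    have ev3: "\<forall>\<^sub>F h in at 0. dist (k h /\<^sub>R h) w' < 1" using kq unfolding tendsto_iff by (meson zero_less_one)
    show "\<forall>\<^sub>F h in at 0. dist (E h / h) 0 < e"
      using ev1 ev2 ev3 eventually_neq_at_within[of 0 0 UNIV]
    proof eventually_elim
      case (elim h)
      have bnd: "norm (Gw (y h) (w0 + \<sigma> *\<^sub>R k h) - B0) \<le> e2" if "0 \<le> \<sigma>" "\<sigma> \<le> 1" for \<sigma>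
      proof -
        have "dist (y h, w0 + \<sigma> *\<^sub>R k h) (y0, w0) = sqrt ((dist (y h) y0)\<^sup>2 + (dist (w0 + \<sigma> *\<^sub>R k h) w0)\<^sup>2)"
          by (simp add: dist_Pair_Pair)
        also have "\<dots> \<le> \<bar>dist (y h) y0\<bar> + \<bar>dist (w0 + \<sigma> *\<^sub>R k h) w0\<bar>" by (rule sqrt_sum_squares_le_sum_abs)
        also have "\<dots> = dist (y h) y0 + \<sigma> * norm (k h)" using that by (simp add: dist_norm)
        also have "\<dots> < d"
        proof -
          have "\<sigma> * norm (k h) \<le> norm (k h)" using that by (simp add: mult_left_le_one_le)
          then show ?thesis using elim(1,2) by simp
        qed
        finally have "dist (Gw (y h) (w0 + \<sigma> *\<^sub>R k h)) B0 < e2" using dd by fastforce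
        then show ?thesis by (simp add: dist_norm)
      qed
      have "\<bar>E h\<bar> \<le> e2 * norm (k h)" unfolding E_def
        by (rule mvt_bound[where Gw=Gw]) (use Gw_grad bnd in auto)
      have nk: "norm (k h /\<^sub>R h) < M" using elim(3) unfolding M_def
        using norm_triangle_ineq2[of "k h /\<^sub>R h" w'] by (simp add: dist_norm)
      have "\<bar>E h / h\<bar> = \<bar>E h\<bar> / \<bar>h\<bar>" by simp
      also have "\<dots> \<le> e2 * norm (k h) / \<bar>h\<bar>" using \<open>\<bar>E h\<bar> \<le> e2 * norm (k h)\<close> by (simp add: divide_right_mono)
      also have "\<dots> = e2 * norm (k h /\<^sub>R h)" by (simp add: divide_inverse mult.commute mult.left_commute)
      also have "\<dots> \<le> e2 * M" using nk e2 by simp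
      also have "\<dots> < e" unfolding e2_def using M e by simp
      finally show ?case by simp
    qed
  qed
  have L: "((\<lambda>h. blinfun_apply B0 (k h /\<^sub>R h)) \<longlongrightarrow> blinfun_apply B0 w') (at 0)"
    using kq by (intro tendsto_intros)
  have "((\<lambda>h. E h / h + blinfun_apply B0 (k h /\<^sub>R h)) \<longlongrightarrow> blinfun_apply B0 w') (at 0)"
    using tendsto_add[OF E0 L] by simp
  then show ?thesis unfolding B0_def[symmetric]
  proof (rule Lim_transform_eventually)
    show "\<forall>\<^sub>F h in at 0. E h / h + blinfun_apply B0 (k h /\<^sub>R h) = (G (y h) (w0 + k h) - G (y h) w0) / h"
    proof (rule eventually_mono[OF eventually_neq_at_within[of 0 0 UNIV]])
    fix h :: real assume h: "h \<noteq> 0"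
    show "E h / h + blinfun_apply B0 (k h /\<^sub>R h) = (G (y h) (w0 + k h) - G (y h) w0) / h"
      using h unfolding E_def by (simp add: blinfun.scaleR_right diff_divide_distrib divide_inverse mult.commute algebra_simps)
  qed
  qed
qed

lemma partB:
  fixes G :: "'x::real_inner \<Rightarrow> 'w::real_normed_vector \<Rightarrow> real" and y :: "real \<Rightarrow> 'x"
  assumes loclip: "loc_lipschitz2 G"
    and Gx_grad: "\<And>z. ((\<lambda>s. (G (xa + s *\<^sub>R z) wb - G xa wb) / s) \<longlongrightarrow> inner (Gx xa wb) z) (at 0)"
    and yq: "((\<lambda>h. (y h - xa) /\<^sub>R h) \<longlongrightarrow> v) (at 0)"
    and y0: "(y \<longlongrightarrow> xa) (at 0)"
  shows "((\<lambda>h. (G (y h) wb - G xa wb) / h) \<longlongrightarrow> inner (Gx xa wb) v) (at 0)"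
proof -
  obtain e K where e: "e > 0" and K: "K-lipschitz_on (ball (xa, wb) e) (\<lambda>q. G (fst q) (snd q))"
    using loclip unfolding loc_lipschitz2_def by blast
  have ev1: "\<forall>\<^sub>F h in at 0. dist (y h) xa < e" using y0 e unfolding tendsto_iff by blast
  have "((\<lambda>h. xa + h *\<^sub>R v) \<longlongrightarrow> xa + 0 *\<^sub>R v) (at 0)" by (intro tendsto_intros)
  then have ev2: "\<forall>\<^sub>F h in at 0. dist (xa + h *\<^sub>R v) xa < e" using e unfolding tendsto_iff by simp
  have Q: "((\<lambda>h. (G (y h) wb - G (xa + h *\<^sub>R v) wb) / h) \<longlongrightarrow> 0) (at 0)"
  proof (rule Lim_null_comparison)
    have "((\<lambda>h. K * norm ((y h - xa) /\<^sub>R h - v)) \<longlongrightarrow> K * norm (v - v)) (at 0)"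
      using yq by (intro tendsto_intros)
    then show "((\<lambda>h. K * norm ((y h - xa) /\<^sub>R h - v)) \<longlongrightarrow> 0) (at 0)" by simp
    show "\<forall>\<^sub>F h in at 0. norm ((G (y h) wb - G (xa + h *\<^sub>R v) wb) / h) \<le> K * norm ((y h - xa) /\<^sub>R h - v)"
      using ev1 ev2 eventually_neq_at_within[of 0 0 UNIV]
    proof eventually_elim
      case (elim h)
      have m1: "(y h, wb) \<in> ball (xa, wb) e" using elim by (simp add: dist_Pair_Pair dist_commute)
      have m2: "(xa + h *\<^sub>R v, wb) \<in> ball (xa, wb) e" using elim by (simp add: dist_Pair_Pair dist_commute)
      have "dist (G (y h) wb) (G (xa + h *\<^sub>R v) wb) \<le> K * dist (y h, wb) (xa + h *\<^sub>R v, wb)"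
        using lipschitz_onD[OF K m1 m2] by simp
      also have "dist (y h, wb) (xa + h *\<^sub>R v, wb) = norm (y h - xa - h *\<^sub>R v)"
        by (simp add: dist_Pair_Pair dist_norm algebra_simps)
      also have "y h - xa - h *\<^sub>R v = h *\<^sub>R ((y h - xa) /\<^sub>R h - v)"
        using elim(3) by (simp add: algebra_simps)
      finally have "\<bar>G (y h) wb - G (xa + h *\<^sub>R v) wb\<bar> \<le> K * (\<bar>h\<bar> * norm ((y h - xa) /\<^sub>R h - v))"
        by (simp add: dist_real_def)
      then show ?case using elim(3)
        by (simp add: abs_divide divide_le_eq mult.commute mult.left_commute)
    qed
  qed
  have "((\<lambda>h. (G (y h) wb - G (xa + h *\<^sub>R v) wb) / h + (G (xa + h *\<^sub>R v) wb - G xa wb) / h)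
         \<longlongrightarrow> 0 + inner (Gx xa wb) v) (at 0)"
    using Q Gx_grad[of v] by (rule tendsto_add)
  then show ?thesis by (simp add: add_divide_distrib[symmetric])
qed

lemma chain:
  fixes G :: "'x::real_inner \<Rightarrow> 'w::real_normed_vector \<Rightarrow> real" and Gw :: "'x \<Rightarrow> 'w \<Rightarrow> ('w \<Rightarrow>\<^sub>L real)"
    and x :: "real \<Rightarrow> 'x" and w :: "real \<Rightarrow> 'w"
  assumes loclip: "loc_lipschitz2 G"
    and Gx_grad: "\<And>z. ((\<lambda>s. (G (x t + s *\<^sub>R z) (w t) - G (x t) (w t)) / s) \<longlongrightarrow> inner (Gx (x t) (w t)) z) (at 0)"
    and Gw_grad: "\<And>x w v. ((\<lambda>s. (G x (w + s *\<^sub>R v) - G x w) / s) \<longlongrightarrow> blinfun_apply (Gw x w) v) (at 0)"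
    and Gw_cont: "continuous_on UNIV (\<lambda>p. Gw (fst p) (snd p))"
    and xd: "(x has_vector_derivative x') (at t)"
    and wd: "(w has_vector_derivative w') (at t)"
  shows "((\<lambda>h. (G (x (t + h)) (w (t + h)) - G (x t) (w t)) / h) \<longlongrightarrow>
           inner (Gx (x t) (w t)) x' + blinfun_apply (Gw (x t) (w t)) w') (at 0)"
proof -
  have xc: "((\<lambda>h. x (t + h)) \<longlongrightarrow> x t) (at 0)"
    using has_vector_derivative_continuous[OF xd] by (simp add: isCont_iff)
  have wc: "((\<lambda>h. w (t + h)) \<longlongrightarrow> w t) (at 0)"
    using has_vector_derivative_continuous[OF wd] by (simp add: isCont_iff)
  have k0: "((\<lambda>h. w (t + h) - w t) \<longlongrightarrow> 0) (at 0)"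
    using tendsto_diff[OF wc tendsto_const[of "w t"]] by simp
  have A: "((\<lambda>h. (G (x (t + h)) (w t + (w (t + h) - w t)) - G (x (t + h)) (w t)) / h) \<longlongrightarrow> blinfun_apply (Gw (x t) (w t)) w') (at 0)"
    by (rule partA[where Gw=Gw, OF Gw_grad Gw_cont xc vd_quot[OF wd] k0])
  have B: "((\<lambda>h. (G (x (t + h)) (w t) - G (x t) (w t)) / h) \<longlongrightarrow> inner (Gx (x t) (w t)) x') (at 0)"
    by (rule partB[where y="\<lambda>h. x (t + h)" and xa="x t" and wb="w t" and Gx=Gx, OF loclip Gx_grad vd_quot[OF xd] xc])
  have "((\<lambda>h. (G (x (t + h)) (w t + (w (t + h) - w t)) - G (x (t + h)) (w t)) / h + (G (x (t + h)) (w t) - G (x t) (w t)) / h)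
     \<longlongrightarrow> blinfun_apply (Gw (x t) (w t)) w' + inner (Gx (x t) (w t)) x') (at 0)"
    using A B by (rule tendsto_add)
  then show ?thesis by (simp add: add_divide_distrib[symmetric] add.commute)
qed

lemma max_deriv_zero:
  fixes D :: "real \<Rightarrow> real"
  assumes "(D \<longlongrightarrow> d) (at 0)"
    and "\<forall>\<^sub>F h in at 0. (h > 0 \<longrightarrow> D h \<le> 0) \<and> (h < 0 \<longrightarrow> D h \<ge> 0)"
  shows "d = 0"
proof -
  have r: "(D \<longlongrightarrow> d) (at_right 0)" and l: "(D \<longlongrightarrow> d) (at_left 0)"
    using assms(1) filterlim_at_split by auto
  have er: "\<forall>\<^sub>F h in at_right 0. D h \<le> 0"
    using assms(2) unfolding eventually_at_split
    by (auto elim!: eventually_mono simp: eventually_at_filter)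
  have el: "\<forall>\<^sub>F h in at_left 0. D h \<ge> 0"
    using assms(2) unfolding eventually_at_split
    by (auto elim!: eventually_mono simp: eventually_at_filter)
  have "d \<le> 0" using tendsto_upperbound[OF r er] by simp
  moreover have "d \<ge> 0" using tendsto_lowerbound[OF l el] by simp
  ultimately show ?thesis by simp
qed

lemma dir_eq:
  fixes G :: "'x::real_normed_vector \<Rightarrow> 'w \<Rightarrow> real"
  shows "\<forall>\<^sub>F s in at (0::real). G (x + s *\<^sub>R v) w = G x w + s * ((G (x + s *\<^sub>R v) w - G x w) / s)"
  by (rule eventually_mono[OF eventually_neq_at_within[of 0 0 UNIV]]) simp

lemma dir_cont:
  fixes G :: "'x::real_normed_vector \<Rightarrow> 'w \<Rightarrow> real"
  assumes Q: "((\<lambda>s. (G (x + s *\<^sub>R v) w - G x w) / s) \<longlongrightarrow> l) (at 0)"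
  shows "((\<lambda>s. G (x + s *\<^sub>R v) w) \<longlongrightarrow> G x w) (at 0)"
proof -
  have "((\<lambda>s. G x w + s * ((G (x + s *\<^sub>R v) w - G x w) / s)) \<longlongrightarrow> G x w + 0 * l) (at 0)"
    using Q by (intro tendsto_intros) auto
  then have "((\<lambda>s. G x w + s * ((G (x + s *\<^sub>R v) w - G x w) / s)) \<longlongrightarrow> G x w) (at 0)" by simp
  then show ?thesis
  proof (rule Lim_transform_eventually)
    show "\<forall>\<^sub>F s in at 0. G x w + s * ((G (x + s *\<^sub>R v) w - G x w) / s) = G (x + s *\<^sub>R v) w"
      using dir_eq[of G x v w] by (auto elim: eventually_mono)
  qed
qed

lemma dir_neg:
  fixes G :: "'x::real_normed_vector \<Rightarrow> 'w \<Rightarrow> real"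
  assumes Q: "((\<lambda>s. (G (x + s *\<^sub>R v) w - G x w) / s) \<longlongrightarrow> l) (at 0)" and l: "l < 0"
  shows "\<forall>\<^sub>F s in at_right 0. G (x + s *\<^sub>R v) w < G x w"
proof -
  have "\<forall>\<^sub>F s in at 0. (G (x + s *\<^sub>R v) w - G x w) / s < 0" using order_tendstoD(2)[OF Q l] .
  then have "\<forall>\<^sub>F s in at_right 0. (G (x + s *\<^sub>R v) w - G x w) / s < 0 \<and> s > 0"
    unfolding eventually_at_split by (auto intro: eventually_conj eventually_at_right_less)
  then show ?thesis
    by (rule eventually_mono) (auto simp: divide_less_0_iff)
qed

lemma dir_pos:
  fixes G :: "'x::real_normed_vector \<Rightarrow> 'w \<Rightarrow> real"
  assumes Q: "((\<lambda>s. (G (x + s *\<^sub>R v) w - G x w) / s) \<longlongrightarrow> l) (at 0)" and l: "l > 0"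
  shows "\<forall>\<^sub>F s in at_right 0. G (x + s *\<^sub>R v) w > G x w"
proof -
  have "\<forall>\<^sub>F s in at 0. (G (x + s *\<^sub>R v) w - G x w) / s > 0" using order_tendstoD(1)[OF Q l] .
  then have "\<forall>\<^sub>F s in at_right 0. (G (x + s *\<^sub>R v) w - G x w) / s > 0 \<and> s > 0"
    unfolding eventually_at_split by (auto intro: eventually_conj eventually_at_right_less)
  then show ?thesis
    by (rule eventually_mono) (auto simp: zero_less_divide_iff)
qed

lemma cone_le:
  fixes G :: "'x::real_inner \<Rightarrow> 'w \<Rightarrow> real"
  assumes VI: "\<And>z. G z w \<le> 1 \<Longrightarrow> 0 \<le> inner (x - z) p + C * (norm (x - z))\<^sup>2"
    and ev: "\<forall>\<^sub>F s in at_right 0. G (x + s *\<^sub>R v) w \<le> 1"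
  shows "inner v p \<le> 0"
proof -
  have ev2: "\<forall>\<^sub>F s in at_right 0. inner v p \<le> C * s * (norm v)\<^sup>2"
    using ev eventually_at_right_less[of 0]
  proof eventually_elim
    case (elim s)
    have "0 \<le> inner (x - (x + s *\<^sub>R v)) p + C * (norm (x - (x + s *\<^sub>R v)))\<^sup>2" using VI elim by blast
    then have "0 \<le> - s * inner v p + C * (s * s) * (norm v)\<^sup>2"
      using elim by (simp add: power2_eq_square algebra_simps)
    then have "s * inner v p \<le> s * (C * s * (norm v)\<^sup>2)" by (simp add: algebra_simps)
    then show ?case using elim by simp
  qed
  have "((\<lambda>s. C * s * (norm v)\<^sup>2) \<longlongrightarrow> C * 0 * (norm v)\<^sup>2) (at_right 0)"
    by (intro tendsto_intros)
  then have "((\<lambda>s. C * s * (norm v)\<^sup>2) \<longlongrightarrow> 0) (at_right 0)" by simp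
  then show ?thesis using tendsto_lowerbound[OF _ ev2] by auto
qed

lemma pointwise:
  fixes G :: "'x::{real_inner,complete_space} \<Rightarrow> 'w::banach \<Rightarrow> real"
    and Gx :: "'x \<Rightarrow> 'w \<Rightarrow> 'x"
    and Gw :: "'x \<Rightarrow> 'w \<Rightarrow> ('w \<Rightarrow>\<^sub>L real)"
    and u \<xi> :: "real \<Rightarrow> 'x" and w :: "real \<Rightarrow> 'w"
  assumes loclip: "loc_lipschitz2 G"
    and Gx_grad: "\<And>x w y. ((\<lambda>t. (G (x + t *\<^sub>R y) w - G x w) / t) \<longlongrightarrow> inner (Gx x w) y) (at 0)"
    and Gw_grad: "\<And>x w v. ((\<lambda>t. (G x (w + t *\<^sub>R v) - G x w) / t) \<longlongrightarrow> blinfun_apply (Gw x w) v) (at 0)"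
    and Gw_cont: "continuous_on UNIV (\<lambda>p. Gw (fst p) (snd p))"
    and c: "c > 0"
    and H1: "\<And>x w. G x w = 1 \<Longrightarrow> norm (Gx x w) \<ge> c"
    and t: "0 < t" "t < T"
    and Zall: "\<forall>\<tau>\<in>{0..T}. u \<tau> - \<xi> \<tau> \<in> Zset G (w \<tau>)"
    and ud: "u differentiable (at t)" and \<xi>d: "\<xi> differentiable (at t)" and wd: "w differentiable (at t)"
    and VI: "\<forall>z\<in>Zset G (w t).
           inner (u t - \<xi> t - z) (vector_derivative \<xi> (at t))
           + norm (vector_derivative \<xi> (at t)) / (2 * r) * (norm (u t - \<xi> t - z))\<^sup>2 \<ge> 0"
  shows "inner (vector_derivative \<xi> (at t))
                 (vector_derivative (\<lambda>\<tau>. u \<tau> - \<xi> \<tau>) (at t) + s_fun G Gx Gw (\<lambda>\<tau>. u \<tau> - \<xi> \<tau>) w t) = 0"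
proof -
  define x where "x = (\<lambda>\<tau>. u \<tau> - \<xi> \<tau>)"
  define p where "p = vector_derivative \<xi> (at t)"
  define u' where "u' = vector_derivative u (at t)"
  define w' where "w' = vector_derivative w (at t)"
  have pd: "(\<xi> has_vector_derivative p) (at t)" using \<xi>d unfolding p_def vector_derivative_works .
  have u'd: "(u has_vector_derivative u') (at t)" using ud unfolding u'_def vector_derivative_works .
  have w'd: "(w has_vector_derivative w') (at t)" using wd unfolding w'_def vector_derivative_works .
  have xd: "(x has_vector_derivative (u' - p)) (at t)" unfolding x_def
    by (rule has_vector_derivative_diff[OF u'd pd])
  have vdx: "vector_derivative x (at t) = u' - p" using xd by (rule vector_derivative_at)
  define X where "X = x t"
  define Wt where "Wt = w t"
  define n where "n = Gx X Wt"
  have VI': "0 \<le> inner (X - z) p + (norm p / (2 * r)) * (norm (X - z))\<^sup>2" if "G z Wt \<le> 1" for z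
    using VI that unfolding X_def x_def p_def Wt_def Zset_def by auto
  have GX: "G X Wt \<le> 1" using Zall t unfolding X_def x_def Wt_def Zset_def by auto
  show ?thesis
  proof (cases "G X Wt < 1")
    case True
    have "((\<lambda>s. G (X + s *\<^sub>R p) Wt) \<longlongrightarrow> G X Wt) (at 0)" by (rule dir_cont[where G=G and x=X and v=p and w=Wt, OF Gx_grad[of X p Wt]])
    then have "\<forall>\<^sub>F s in at 0. G (X + s *\<^sub>R p) Wt < 1" using True by (rule order_tendstoD)
    then have "\<forall>\<^sub>F s in at_right 0. G (X + s *\<^sub>R p) Wt \<le> 1"
      unfolding eventually_at_split by (auto elim: eventually_mono)
    then have "inner p p \<le> 0" using cone_le[where G=G and w=Wt and x=X and p=p and C="norm p / (2 * r)", OF VI'] by blast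
    then have "p = 0" by (meson antisym inner_eq_zero_iff inner_ge_zero)
    then show ?thesis unfolding p_def by simp
  next
    case False
    then have G1: "G X Wt = 1" using GX by simp
    have nc: "norm n \<ge> c" unfolding n_def using H1[OF G1] .
    then have n0: "n \<noteq> 0" using c by auto
    have nn: "inner n n > 0" using n0 by simp
    have negdir: "inner v p \<le> 0" if "inner n v < 0" for v
    proof (rule cone_le[where G=G and w=Wt and x=X and p=p and C="norm p / (2 * r)", OF VI'])
      show "\<forall>\<^sub>F s in at_right 0. G (X + s *\<^sub>R v) Wt \<le> 1"
        using dir_neg[where G=G and x=X and v=v and w=Wt, OF Gx_grad[of X v Wt] that[unfolded n_def]] G1 by (auto elim: eventually_mono)
    qed
    define \<alpha> where "\<alpha> = inner n p / inner n n"
    define q where "q = p - \<alpha> *\<^sub>R n"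
    have nq: "inner n q = 0" unfolding q_def \<alpha>_def using nn by (simp add: inner_diff_right)
    have qp_le: "inner q p \<le> 0"
    proof (rule ccontr)
      assume A: "\<not> inner q p \<le> 0"
      show False
      proof (cases "inner n p \<le> 0")
        case True
        have "inner (q - 1 *\<^sub>R n) p \<le> 0" by (rule negdir) (use nq nn in \<open>simp add: inner_diff_right\<close>)
        then show False using A True by (simp add: inner_diff_left)
      next
        case False
        define \<delta> where "\<delta> = inner q p / (2 * inner n p)"
        have \<delta>: "\<delta> > 0" unfolding \<delta>_def using A False by simp
        have "inner (q - \<delta> *\<^sub>R n) p \<le> 0" by (rule negdir) (use nq nn \<delta> in \<open>simp add: inner_diff_right\<close>)
        then have "inner q p \<le> \<delta> * inner n p" by (simp add: inner_diff_left)
        also have "\<delta> * inner n p = inner q p / 2" unfolding \<delta>_def using False by simp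
        finally show False using A by simp
      qed
    qed
    have pq: "p = q + \<alpha> *\<^sub>R n" by (simp add: q_def)
    have "inner q p = inner q q + \<alpha> * inner q n" by (subst pq) (simp add: inner_add_right)
    also have "inner q n = 0" using nq by (simp add: inner_commute)
    finally have "inner q p = inner q q" by simp
    then have "q = 0" using qp_le by (metis antisym inner_eq_zero_iff inner_ge_zero)
    then have pa: "p = \<alpha> *\<^sub>R n" unfolding q_def by simp
    define d where "d = inner n (u' - p) + blinfun_apply (Gw X Wt) w'"
    have D: "((\<lambda>h. (G (x (t + h)) (w (t + h)) - G (x t) (w t)) / h) \<longlongrightarrow> d) (at 0)"
      unfolding d_def n_def X_def Wt_def by (rule chain[where G=G and Gx=Gx and Gw=Gw and x=x and w=w and t=t, OF loclip Gx_grad Gw_grad Gw_cont xd w'd])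
    have mpos: "min t (T - t) > 0" using t by simp
    have evh: "\<forall>\<^sub>F h in at 0. dist h 0 < min t (T - t)"
      unfolding eventually_at by (rule exI[of _ "min t (T - t)"]) (use mpos in auto)
    have "d = 0"
    proof (rule max_deriv_zero[OF D])
      show "\<forall>\<^sub>F h in at 0. (h > 0 \<longrightarrow> (G (x (t + h)) (w (t + h)) - G (x t) (w t)) / h \<le> 0) \<and>
                           (h < 0 \<longrightarrow> (G (x (t + h)) (w (t + h)) - G (x t) (w t)) / h \<ge> 0)"
        using evh
      proof (rule eventually_mono)
        fix h :: real assume "dist h 0 < min t (T - t)"
        then have "t + h \<in> {0..T}" by (simp add: dist_real_def abs_less_iff)
        then have "G (x (t + h)) (w (t + h)) \<le> 1" using Zall unfolding x_def Zset_def by auto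
        moreover have "G (x t) (w t) = 1" using G1 unfolding X_def Wt_def .
        ultimately show "(h > 0 \<longrightarrow> (G (x (t + h)) (w (t + h)) - G (x t) (w t)) / h \<le> 0) \<and>
                           (h < 0 \<longrightarrow> (G (x (t + h)) (w (t + h)) - G (x t) (w t)) / h \<ge> 0)"
          by (auto intro: divide_nonpos_pos divide_nonpos_neg)
      qed
    qed
    have front: "X \<in> frontier (Zset G Wt)"
    proof -
      have XZ: "X \<in> Zset G Wt" using GX unfolding Zset_def by simp
      have "X \<notin> interior (Zset G Wt)"
      proof
        assume "X \<in> interior (Zset G Wt)"
        then obtain e where e: "e > 0" "ball X e \<subseteq> Zset G Wt" using mem_interior by blast
        have "((\<lambda>s. X + s *\<^sub>R n) \<longlongrightarrow> X + 0 *\<^sub>R n) (at 0)" by (intro tendsto_intros)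
        then have "((\<lambda>s. X + s *\<^sub>R n) \<longlongrightarrow> X) (at_right 0)"
          using filterlim_at_split by auto
        then have e1: "\<forall>\<^sub>F s in at_right 0. dist (X + s *\<^sub>R n) X < e" using e(1) unfolding tendsto_iff by blast
        have e2: "\<forall>\<^sub>F s in at_right 0. G (X + s *\<^sub>R n) Wt > G X Wt"
          by (rule dir_pos[where G=G and x=X and v=n and w=Wt, OF Gx_grad[of X n Wt]]) (use nn in \<open>simp add: n_def\<close>)
        obtain s where s: "dist (X + s *\<^sub>R n) X < e" "G (X + s *\<^sub>R n) Wt > G X Wt"
          using eventually_happens'[OF trivial_limit_at_right_real eventually_conj[OF e1 e2]] by blast
        then have "X + s *\<^sub>R n \<in> Zset G Wt" using e(2) by (auto simp: dist_commute)
        then show False using s G1 unfolding Zset_def by simp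
      qed
      then show ?thesis using XZ closure_subset unfolding frontier_def by blast
    qed
    have sf: "s_fun G Gx Gw x w t = (blinfun_apply (Gw X Wt) w' / inner n n) *\<^sub>R n"
    proof -
      have fr: "frontier (Zset G (w t)) \<noteq> {}" "infdist (x t) (frontier (Zset G (w t))) = 0"
        using front unfolding X_def Wt_def by auto
      show ?thesis unfolding s_fun_def using fr
        by (simp add: X_def Wt_def n_def w'_def power2_norm_eq_inner)
    qed
    have "inner p (vector_derivative x (at t) + s_fun G Gx Gw x w t)
        = \<alpha> * (inner n (u' - p) + blinfun_apply (Gw X Wt) w' / inner n n * inner n n)"
      unfolding vdx sf by (subst (1) pa) (simp add: inner_add_right algebra_simps)
    also have "\<dots> = \<alpha> * d" unfolding d_def using nn by simp
    finally show ?thesis unfolding p_def x_def \<open>d = 0\<close> by simp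
  qed
qed

theorem lemma2p4:
  fixes G :: "'x::{real_inner,complete_space} \<Rightarrow> 'w::banach \<Rightarrow> real"
    and Gx :: "'x \<Rightarrow> 'w \<Rightarrow> 'x"
    and Gw :: "'x \<Rightarrow> 'w \<Rightarrow> ('w \<Rightarrow>\<^sub>L real)"
    and lam c L T :: real
    and \<mu>1 :: "'w \<Rightarrow> real \<Rightarrow> real" and \<mu>2 :: "real \<Rightarrow> real"
    and u \<xi> :: "real \<Rightarrow> 'x" and w :: "real \<Rightarrow> 'w" and x0 :: 'x
  assumes T_pos: "T > 0"
    and G_nonneg: "\<And>x w. G x w \<ge> 0"
    and G_loclip: "loc_lipschitz2 G"
    and Gx_grad: "\<And>x w y. ((\<lambda>t. (G (x + t *\<^sub>R y) w - G x w) / t) \<longlongrightarrow> inner (Gx x w) y) (at 0)"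
    and Gw_grad: "\<And>x w v. ((\<lambda>t. (G x (w + t *\<^sub>R v) - G x w) / t) \<longlongrightarrow> blinfun_apply (Gw x w) v) (at 0)"
    and Gw_cont: "continuous_on UNIV (\<lambda>p. Gw (fst p) (snd p))"
    and pos: "lam > 0" "c > 0" "L > 0"
    and mu1: "\<And>w. \<mu>1 w 0 = 0" "\<And>w s. s \<ge> 0 \<Longrightarrow> \<mu>1 w s \<ge> 0" "\<And>w. filterlim (\<mu>1 w) at_top at_top"
    and mu2: "\<mu>2 0 = 0" "\<And>s. s \<ge> 0 \<Longrightarrow> \<mu>2 s \<ge> 0" "filterlim \<mu>2 at_top at_top"
    and H1: "\<And>x w. G x w = 1 \<Longrightarrow> norm (Gx x w) \<ge> c"
    and H2: "\<And>x y w. x \<in> Zset G w \<Longrightarrow> y \<in> Zset G w \<Longrightarrow> norm (Gx x w - Gx y w) \<le> \<mu>1 w (norm (x - y))"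
    and H3: "\<And>x z w. x \<in> frontier (Zset G w) \<Longrightarrow> z \<in> Zset G w \<Longrightarrow>
               inner (Gx x w - Gx z w) (x - z) \<ge> - lam * (norm (x - z))\<^sup>2"
    and H4: "\<And>x w w'. \<bar>G x w - G x w'\<bar> \<le> L * norm (w - w')"
    and H5: "\<And>x w \<rho>. \<rho> > 0 \<Longrightarrow> (\<forall>z\<in>Zset G w. dist x z \<ge> \<rho>) \<Longrightarrow> G x w - 1 \<ge> \<mu>2 \<rho>"
    and u_W11: "W11 T u" and w_W11: "W11 T w"
    and x0_in: "x0 \<in> Zset G (w 0)"
    and sol: "sweeping_sol G (c / lam) T u w x0 \<xi>"
  shows "AE t in lborel. t \<in> {0<..<T} \<longrightarrow>
           inner (vector_derivative \<xi> (at t))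
                 (vector_derivative (\<lambda>\<tau>. u \<tau> - \<xi> \<tau>) (at t) + s_fun G Gx Gw (\<lambda>\<tau>. u \<tau> - \<xi> \<tau>) w t) = 0"
proof -
  have sW: "W11 T \<xi>" and sZ: "\<forall>t\<in>{0..T}. u t - \<xi> t \<in> Zset G (w t)"
    and sVI: "AE t in lborel. t \<in> {0<..<T} \<longrightarrow>
        (\<forall>z\<in>Zset G (w t).
           inner (u t - \<xi> t - z) (vector_derivative \<xi> (at t))
           + norm (vector_derivative \<xi> (at t)) / (2 * (c / lam)) * (norm (u t - \<xi> t - z))\<^sup>2 \<ge> 0)"
    using sol unfolding sweeping_sol_def by auto
  have du: "AE t in lborel. t \<in> {0<..<T} \<longrightarrow> u differentiable (at t)" using u_W11 unfolding W11_def by auto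
  have dw: "AE t in lborel. t \<in> {0<..<T} \<longrightarrow> w differentiable (at t)" using w_W11 unfolding W11_def by auto
  have dx: "AE t in lborel. t \<in> {0<..<T} \<longrightarrow> \<xi> differentiable (at t)" using sW unfolding W11_def by auto
  have all: "AE t in lborel. (t \<in> {0<..<T} \<longrightarrow> u differentiable (at t)) \<and>
      ((t \<in> {0<..<T} \<longrightarrow> w differentiable (at t)) \<and>
      ((t \<in> {0<..<T} \<longrightarrow> \<xi> differentiable (at t)) \<and>
      (t \<in> {0<..<T} \<longrightarrow>
        (\<forall>z\<in>Zset G (w t).
           inner (u t - \<xi> t - z) (vector_derivative \<xi> (at t))
           + norm (vector_derivative \<xi> (at t)) / (2 * (c / lam)) * (norm (u t - \<xi> t - z))\<^sup>2 \<ge> 0))))"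
    by (intro AE_conjI du dw dx sVI)
  show ?thesis
  proof (rule AE_mp[OF all AE_I2], intro impI)
    fix t assume H: "(t \<in> {0<..<T} \<longrightarrow> u differentiable (at t)) \<and>
      ((t \<in> {0<..<T} \<longrightarrow> w differentiable (at t)) \<and>
      ((t \<in> {0<..<T} \<longrightarrow> \<xi> differentiable (at t)) \<and>
      (t \<in> {0<..<T} \<longrightarrow>
        (\<forall>z\<in>Zset G (w t).
           inner (u t - \<xi> t - z) (vector_derivative \<xi> (at t))
           + norm (vector_derivative \<xi> (at t)) / (2 * (c / lam)) * (norm (u t - \<xi> t - z))\<^sup>2 \<ge> 0))))"
      and t: "t \<in> {0<..<T}"
    show "inner (vector_derivative \<xi> (at t))
                 (vector_derivative (\<lambda>\<tau>. u \<tau> - \<xi> \<tau>) (at t) + s_fun G Gx Gw (\<lambda>\<tau>. u \<tau> - \<xi> \<tau>) w t) = 0"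
      using H t
      by (intro pointwise[where G=G and Gx=Gx and Gw=Gw and u=u and \<xi>=\<xi> and w=w and T=T and c=c and r="c / lam",
            OF G_loclip Gx_grad Gw_grad Gw_cont pos(2) H1]) (auto simp: sZ)
  qed
qed

end
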